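(* Let $\mathbf{X}^{(1)},\dots,\mathbf{X}^{(n)}$ be independent and identically distributed copies of a random vector $\mathbf{X}=(X_1,\dots,X_d)$ satisfying condition $(\mathcal{H})$, with distribution function $F$, and for $\mathbf{x}=(x_0,\dots,x_d)\in\mathbb{R}^{d+1}$ let $$\|\mathbf{x}\|_{\widehat F_n}=\frac1n\sum_{i=1}^n\max\big(|x_0|,|x_1|X^{(i)}_1,\dots,|x_d|X^{(i)}_d\big)$$ (the $F$-norm of the empirical distribution function $\widehat F_n$ of the sample). Then for any $\mathbf{x}_0\in[0,\infty)^{d+1}$, $$\sup_{\mathbf{0}\le\mathbf{x}\le\mathbf{x}_0}\big|\|\mathbf{x}\|_{\widehat F_n}-\|\mathbf{x}\|_F\big|\to0\quad\text{almost surely as } n\to\infty.$$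
   Context: Condition $(\mathcal{H})$: each $X_i$ is almost surely nonnegative with $0<E(X_i)<\infty$. The $F$-norm is $\|\mathbf{x}\|_F:=E\big(\max(|x_0|,|x_1|X_1,\dots,|x_d|X_d)\big)$ for $\mathbf{x}\in\mathbb{R}^{d+1}$. Inequalities between vectors are componentwise. *)

theory Defs
  imports "HOL-Probability.Probability"
begin

definition maxterm :: "nat \<Rightarrow> (nat \<Rightarrow> real) \<Rightarrow> (nat \<Rightarrow> real) \<Rightarrow> real" where
  "maxterm d x v = Max (insert \<bar>x 0\<bar> ((\<lambda>j. \<bar>x j\<bar> * v j) ` {1..d}))"

text \<open>F-norm: X j is the j-th component (j = 1..d) of the random vector.\<close>
definition F_norm :: "'a measure \<Rightarrow> (nat \<Rightarrow> 'a \<Rightarrow> real) \<Rightarrow> nat \<Rightarrow> (nat \<Rightarrow> real) \<Rightarrow> real" where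
  "F_norm M X d x = (\<integral>\<omega>. maxterm d x (\<lambda>j. X j \<omega>) \<partial>M)"

text \<open>Empirical F-norm from the first n sample vectors Y 0, ..., Y (n-1); Y i j is component j of sample i.\<close>
definition emp_norm :: "(nat \<Rightarrow> nat \<Rightarrow> 'a \<Rightarrow> real) \<Rightarrow> nat \<Rightarrow> nat \<Rightarrow> (nat \<Rightarrow> real) \<Rightarrow> 'a \<Rightarrow> real" where
  "emp_norm Y d n x \<omega> = (1 / real n) * (\<Sum>i<n. maxterm d x (\<lambda>j. Y i j \<omega>))"

end

theory Submission
  imports Defs
begin

definition kf :: "real \<Rightarrow> nat \<Rightarrow> nat" where "kf a m = nat \<lfloor>a ^ m\<rfloor>"

lemma kf_le: "a \<ge> 1 \<Longrightarrow> real (kf a m) \<le> a ^ m"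
  unfolding kf_def by (simp add: one_le_power)

lemma kf_gt: "a \<ge> 1 \<Longrightarrow> a ^ m < real (kf a m) + 1"
  unfolding kf_def using one_le_power[of a m] by linarith

lemma kf_ge1: "a \<ge> 1 \<Longrightarrow> kf a m \<ge> 1"
  unfolding kf_def using one_le_power[of a m] by linarith

lemma kf_half: "a \<ge> 1 \<Longrightarrow> a ^ m \<le> 2 * real (kf a m)"
  using kf_gt[of a m] kf_ge1[of a m] by linarith

lemma kf_mono: "a \<ge> 1 \<Longrightarrow> m \<le> m' \<Longrightarrow> kf a m \<le> kf a m'"
  unfolding kf_def by (intro nat_mono floor_mono power_increasing) auto

lemma kf_ratio_pow:
  assumes a: "a > 1"
  shows "(\<lambda>m. real (kf a m) / a ^ m) \<longlonglongrightarrow> 1"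
proof -
  have lim0: "(\<lambda>m. 1 / a ^ m) \<longlonglongrightarrow> 0"
    using LIMSEQ_inverse_realpow_zero[OF a] by (simp add: divide_inverse)
  have eq: "real (kf a m) / a ^ m = 1 - (a ^ m - real (kf a m)) / a ^ m" for m
    using a by (simp add: field_simps)
  have "(\<lambda>m. (a ^ m - real (kf a m)) / a ^ m) \<longlonglongrightarrow> 0"
  proof (rule Lim_null_comparison[OF _ lim0])
    show "\<forall>\<^sub>F m in sequentially. norm ((a ^ m - real (kf a m)) / a ^ m) \<le> 1 / a ^ m"
    proof (intro always_eventually allI)
      fix m
      have "0 \<le> a ^ m - real (kf a m)" "a ^ m - real (kf a m) \<le> 1"
        using kf_le[of a m] kf_gt[of a m] a by auto
      then show "norm ((a ^ m - real (kf a m)) / a ^ m) \<le> 1 / a ^ m"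
        using a by (auto simp: divide_right_mono)
    qed
  qed
  then have "(\<lambda>m. 1 - (a ^ m - real (kf a m)) / a ^ m) \<longlonglongrightarrow> 1 - 0"
    by (intro tendsto_intros)
  then show ?thesis by (simp add: eq)
qed

lemma kf_ratio:
  assumes a: "a > 1"
  shows "(\<lambda>m. real (kf a (Suc m)) / real (kf a m)) \<longlonglongrightarrow> a"
proof -
  have l1: "(\<lambda>m. real (kf a (Suc m)) / a ^ Suc m) \<longlonglongrightarrow> 1"
    using LIMSEQ_Suc[OF kf_ratio_pow[OF a]] .
  have "(\<lambda>m. (real (kf a (Suc m)) / a ^ Suc m) / (real (kf a m) / a ^ m) * a) \<longlonglongrightarrow> 1 / 1 * a"
    by (intro tendsto_intros l1 kf_ratio_pow[OF a]) auto
  moreover have "(real (kf a (Suc m)) / a ^ Suc m) / (real (kf a m) / a ^ m) * a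
      = real (kf a (Suc m)) / real (kf a m)" for m
    using a kf_ge1[of a m] by (simp add: field_simps)
  ultimately show ?thesis by (simp only:) simp
qed

lemma pow_at_top:
  assumes a: "(a::real) > 1"
  shows "filterlim (\<lambda>m. a ^ m) at_top sequentially"
proof (subst filterlim_at_top, intro allI)
  fix Z :: real
  obtain n where n: "Z < a ^ n" using real_arch_pow[OF a] by blast
  show "\<forall>\<^sub>F m in sequentially. Z \<le> a ^ m"
    unfolding eventually_sequentially
  proof (intro exI[of _ n] allI impI)
    fix m assume "n \<le> m"
    then have "a ^ n \<le> a ^ m" using a by (intro power_increasing) auto
    then show "Z \<le> a ^ m" using n by simp
  qed
qed

lemma kf_at_top:
  assumes a: "a > 1"
  shows "filterlim (kf a) at_top sequentially"
proof (rule filterlim_at_top_mono[of "\<lambda>m. nat \<lfloor>a ^ m\<rfloor>"])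
  show "filterlim (\<lambda>m. nat \<lfloor>a ^ m\<rfloor>) at_top sequentially"
  proof (rule filterlim_compose[OF filterlim_nat_sequentially])
    show "filterlim (\<lambda>m. \<lfloor>a ^ m\<rfloor>) at_top sequentially"
      by (rule filterlim_compose[OF filterlim_floor_sequentially])
         (rule pow_at_top[OF a])
  qed
qed (simp add: kf_def)


lemma kf_bracket:
  assumes a: "a > 1" and n: "n \<ge> 1"
  shows "kf a (nat \<lfloor>log a (real n)\<rfloor>) \<le> n \<and> n \<le> kf a (Suc (nat \<lfloor>log a (real n)\<rfloor>))"
proof -
  define m where "m = nat \<lfloor>log a (real n)\<rfloor>"
  have n0: "real n > 0" using n by simp
  have lg: "0 \<le> log a (real n)" using a n by simp
  have mr: "real m = real_of_int \<lfloor>log a (real n)\<rfloor>" using lg unfolding m_def by simp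
  have "a ^ m = a powr (real m)" using a by (simp add: powr_realpow)
  also have "\<dots> \<le> a powr (log a (real n))"
    using a mr by (intro powr_mono) auto
  also have "\<dots> = real n" using a n0 by simp
  finally have h1: "a ^ m \<le> real n" .
  have "real n = a powr (log a (real n))" using a n0 by simp
  also have "\<dots> < a powr (real (Suc m))"
    using a mr by (intro powr_less_mono) (auto, linarith)
  also have "\<dots> = a ^ Suc m" using a by (simp add: powr_realpow del: of_nat_Suc)
  finally have h2: "real n < a ^ Suc m" .
  have "real (kf a m) \<le> real n" using kf_le[of a m] h1 a by simp
  moreover have "real n < real (kf a (Suc m)) + 1" using kf_gt[of a "Suc m"] h2 a by simp
  ultimately show ?thesis unfolding m_def[symmetric] by simp
qed

lemma interp_one:
  fixes s :: "nat \<Rightarrow> real"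
  assumes a: "a > 1" and s_nn: "\<And>n. 0 \<le> s n" and mono: "\<And>n. s n \<le> s (Suc n)"
    and lim: "(\<lambda>m. s (kf a m) / real (kf a m)) \<longlonglongrightarrow> \<mu>" and e: "e > 0"
  shows "eventually (\<lambda>n. \<mu> / a - e < s n / real n \<and> s n / real n < \<mu> * a + e) sequentially"
proof -
  have monoS: "s i \<le> s j" if "i \<le> j" for i j
    using lift_Suc_mono_le[of s, OF mono that] .
  define u where "u j = s (kf a (Suc j)) / real (kf a j)" for j
  define l where "l j = s (kf a j) / real (kf a (Suc j))" for j
  have kpos: "real (kf a j) > 0" for j using kf_ge1[of a j] a by simp
  have "(\<lambda>j. s (kf a (Suc j)) / real (kf a (Suc j)) * (real (kf a (Suc j)) / real (kf a j))) \<longlonglongrightarrow> \<mu> * a"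
    by (intro tendsto_intros LIMSEQ_Suc[OF lim] kf_ratio[OF a])
  moreover have "s (kf a (Suc j)) / real (kf a (Suc j)) * (real (kf a (Suc j)) / real (kf a j)) = u j" for j
    using kpos[of j] kpos[of "Suc j"] unfolding u_def by (simp add: field_simps)
  ultimately have ul: "u \<longlonglongrightarrow> \<mu> * a" by (simp only:)
  have "(\<lambda>j. (s (kf a j) / real (kf a j)) / (real (kf a (Suc j)) / real (kf a j))) \<longlonglongrightarrow> \<mu> / a"
    using a by (intro tendsto_intros lim kf_ratio[OF a]) auto
  moreover have "(s (kf a j) / real (kf a j)) / (real (kf a (Suc j)) / real (kf a j)) = l j" for j
    using kpos[of j] kpos[of "Suc j"] unfolding l_def by (simp add: field_simps)
  ultimately have ll: "l \<longlonglongrightarrow> \<mu> / a" by (simp only:)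
  have "eventually (\<lambda>j. u j < \<mu> * a + e) sequentially"
    using order_tendstoD(2)[OF ul, of "\<mu> * a + e"] e by simp
  moreover have "eventually (\<lambda>j. \<mu> / a - e < l j) sequentially"
    using order_tendstoD(1)[OF ll, of "\<mu> / a - e"] e by simp
  ultimately have "eventually (\<lambda>j. u j < \<mu> * a + e \<and> \<mu> / a - e < l j) sequentially"
    by (rule eventually_conj)
  then obtain J where J: "\<And>j. j \<ge> J \<Longrightarrow> u j < \<mu> * a + e \<and> \<mu> / a - e < l j"
    unfolding eventually_sequentially by blast
  show ?thesis unfolding eventually_sequentially
  proof (intro exI[of _ "Suc (kf a J)"] allI impI)
    fix n assume n: "Suc (kf a J) \<le> n"
    then have n1: "n \<ge> 1" by simp
    define m where "m = nat \<lfloor>log a (real n)\<rfloor>"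
    have br: "kf a m \<le> n" "n \<le> kf a (Suc m)" using kf_bracket[OF a n1] unfolding m_def by auto
    have mJ: "m \<ge> J"
    proof (rule ccontr)
      assume "\<not> J \<le> m"
      then have "Suc m \<le> J" by simp
      then have "kf a (Suc m) \<le> kf a J" using a by (intro kf_mono) auto
      then show False using br n by simp
    qed
    have np: "real n > 0" using n1 by simp
    have "s n / real n \<le> s (kf a (Suc m)) / real n"
      using monoS[OF br(2)] np by (simp add: divide_right_mono)
    also have "\<dots> \<le> s (kf a (Suc m)) / real (kf a m)"
      using br(1) kpos[of m] s_nn by (intro divide_left_mono) auto
    also have "\<dots> < \<mu> * a + e" using J[OF mJ] unfolding u_def by simp
    finally have up: "s n / real n < \<mu> * a + e" .
    have "\<mu> / a - e < s (kf a m) / real (kf a (Suc m))" using J[OF mJ] unfolding l_def by simp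
    also have "\<dots> \<le> s (kf a m) / real n"
      using br(2) np s_nn by (intro divide_left_mono) auto
    also have "\<dots> \<le> s n / real n"
      using monoS[OF br(1)] np by (simp add: divide_right_mono)
    finally show "\<mu> / a - e < s n / real n \<and> s n / real n < \<mu> * a + e" using up by simp
  qed
qed

lemma interp:
  fixes s :: "nat \<Rightarrow> real"
  assumes s_nn: "\<And>n. 0 \<le> s n" and mono: "\<And>n. s n \<le> s (Suc n)" and mu: "\<mu> \<ge> 0"
    and lim: "\<And>r::nat. (\<lambda>m. s (kf (1 + 1 / Suc r) m) / real (kf (1 + 1 / Suc r) m)) \<longlonglongrightarrow> \<mu>"
  shows "(\<lambda>n. s n / real n) \<longlonglongrightarrow> \<mu>"
proof (rule LIMSEQ_I)
  fix \<epsilon> :: real assume eps: "\<epsilon> > 0"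
  obtain r :: nat where r: "\<mu> / Suc r < \<epsilon> / 2"
  proof -
    obtain r :: nat where "\<mu> * 2 / \<epsilon> < r" using reals_Archimedean2 by blast
    then have "\<mu> * 2 < \<epsilon> * Suc r" using eps by (simp add: field_simps)
    then show ?thesis using that[of r] by (simp add: field_simps)
  qed
  define a where "a = 1 + 1 / real (Suc r)"
  have a: "a > 1" unfolding a_def by simp
  have ev: "eventually (\<lambda>n. \<mu> / a - \<epsilon>/2 < s n / real n \<and> s n / real n < \<mu> * a + \<epsilon>/2) sequentially"
  proof -
    have lr: "(\<lambda>m. s (kf a m) / real (kf a m)) \<longlonglongrightarrow> \<mu>" using lim[of r] unfolding a_def .
    show ?thesis using interp_one[of a s, OF a s_nn mono lr, of "\<epsilon>/2"] eps by simp
  qed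
  have u: "\<mu> * a = \<mu> + \<mu> / Suc r" unfolding a_def by (simp add: field_simps)
  have "\<mu> / a \<ge> \<mu> - \<mu> / Suc r"
  proof -
    have q: "real (Suc r) > 0" by simp
    have "\<mu> / a - (\<mu> - \<mu> / Suc r) = \<mu> / (real (Suc r) * (real (Suc r) + 1))"
      unfolding a_def using q by (simp add: field_simps del: of_nat_Suc)
    also have "\<dots> \<ge> 0" using mu by simp
    finally show ?thesis by simp
  qed
  then have lo: "\<mu> / a - \<epsilon>/2 \<ge> \<mu> - \<epsilon>" using r by linarith
  have hi: "\<mu> * a + \<epsilon>/2 \<le> \<mu> + \<epsilon>" using u r by linarith
  have "eventually (\<lambda>n. norm (s n / real n - \<mu>) < \<epsilon>) sequentially"
    using ev
  proof (rule eventually_mono)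
    fix n assume "\<mu> / a - \<epsilon>/2 < s n / real n \<and> s n / real n < \<mu> * a + \<epsilon>/2"
    then show "norm (s n / real n - \<mu>) < \<epsilon>" using lo hi by (simp add: abs_less_iff)
  qed
  then show "\<exists>no. \<forall>n\<ge>no. norm (s n / real n - \<mu>) < \<epsilon>"
    unfolding eventually_sequentially .
qed


lemma series_bound:
  assumes a: "a > 1" and z: "z \<ge> 0" and e: "e > 0"
  shows "(\<Sum>m. ennreal (if z \<le> real (kf a m) then z^2 / (e * real (kf a m)) else 0))
          \<le> ennreal (2 * a / ((a - 1) * e) * z)"
proof (cases "z = 0")
  case True
  then show ?thesis by simp
next
  case False
  then have zp: "z > 0" using z by simp
  obtain n where "z < a ^ n" using real_arch_pow[OF a] by blast
  define m0 where "m0 = (LEAST m. z \<le> a ^ m)"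
  have m0: "z \<le> a ^ m0" unfolding m0_def by (rule LeastI[of _ n]) (use \<open>z < a ^ n\<close> in simp)
  have m0le: "m0 \<le> m" if "z \<le> a ^ m" for m unfolding m0_def by (rule Least_le) (rule that)
  define h where "h m = (if m0 \<le> m then 2 * z^2 / e * (1/a)^m else 0)" for m
  have kpos: "real (kf a m) > 0" for m using kf_ge1[of a m] a by simp
  have term_le: "(if z \<le> real (kf a m) then z^2 / (e * real (kf a m)) else 0) \<le> h m" for m
  proof (cases "z \<le> real (kf a m)")
    case True
    then have "z \<le> a ^ m" using kf_le[of a m] a by simp
    then have "m0 \<le> m" by (rule m0le)
    have "z^2 / (e * real (kf a m)) \<le> z^2 / (e * (a ^ m / 2))"
      using kf_half[of a m] a e zp kpos[of m] by (intro divide_left_mono mult_left_mono mult_pos_pos) auto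
    also have "\<dots> = 2 * z^2 / e * (1/a)^m" using a e by (simp add: field_simps power_one_over)
    finally show ?thesis using True \<open>m0 \<le> m\<close> unfolding h_def by simp
  next
    case False
    then show ?thesis unfolding h_def using a e by simp
  qed
  have geo: "(\<lambda>n. (1/a)^n) sums (1 / (1 - 1/a))"
    using a by (intro geometric_sums) auto
  have hsh: "(\<lambda>n. h (n + m0)) sums (2 * z^2 / e * (1/a)^m0 * (1 / (1 - 1/a)))"
  proof -
    have "(\<lambda>n. 2 * z^2 / e * (1/a)^m0 * (1/a)^n) sums (2 * z^2 / e * (1/a)^m0 * (1 / (1 - 1/a)))"
      by (intro sums_mult geo)
    moreover have "h (n + m0) = 2 * z^2 / e * (1/a)^m0 * (1/a)^n" for n
      unfolding h_def by (simp add: power_add)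
    ultimately show ?thesis by simp
  qed
  have hs: "summable h" using hsh by (subst summable_iff_shift[symmetric, of _ m0]) (auto simp: sums_iff)
  have "suminf h = (\<Sum>n. h (n + m0)) + (\<Sum>i<m0. h i)"
    by (rule suminf_split_initial_segment[OF hs])
  also have "(\<Sum>i<m0. h i) = 0" unfolding h_def by simp
  also have "(\<Sum>n. h (n + m0)) = 2 * z^2 / e * (1/a)^m0 * (1 / (1 - 1/a))" using hsh by (simp add: sums_iff)
  finally have hsum: "suminf h = 2 * z^2 / e * (1/a)^m0 * (1 / (1 - 1/a))" by simp
  have "z * (1/a)^m0 \<le> 1" using m0 a by (simp add: power_one_over field_simps)
  then have "suminf h \<le> 2 * z / e * (1 / (1 - 1/a))"
  proof -
    have eqx: "2 * z^2 / e * (1/a)^m0 * (1 / (1 - 1/a)) = (2 * z / e * (1 / (1 - 1/a))) * (z * (1/a)^m0)"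
      by (simp add: power2_eq_square)
    have c0: "0 \<le> 2 * z / e * (1 / (1 - 1/a))" using a e zp by (simp add: field_simps)
    show ?thesis unfolding hsum eqx using mult_left_mono[OF \<open>z * (1/a)^m0 \<le> 1\<close> c0] by simp
  qed
  also have "\<dots> = 2 * a / ((a - 1) * e) * z" using a e by (simp add: field_simps)
  finally have hb: "suminf h \<le> 2 * a / ((a - 1) * e) * z" .
  have hnn: "0 \<le> h m" for m unfolding h_def using a e by simp
  have "(\<Sum>m. ennreal (if z \<le> real (kf a m) then z^2 / (e * real (kf a m)) else 0)) \<le> (\<Sum>m. ennreal (h m))"
    by (intro suminf_le summableI ennreal_leI term_le)
  also have "\<dots> = ennreal (suminf h)" by (rule suminf_ennreal2[OF hnn hs])
  also have "\<dots> \<le> ennreal (2 * a / ((a - 1) * e) * z)" by (rule ennreal_leI[OF hb])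
  finally show ?thesis .
qed


lemma (in prob_space) var_sum_le:
  fixes X :: "nat \<Rightarrow> 'a \<Rightarrow> real"
  assumes indep: "indep_vars (\<lambda>_. borel) X UNIV" and bnd: "\<And>i \<omega>. \<bar>X i \<omega>\<bar> \<le> B i"
  shows "expectation (\<lambda>\<omega>. ((\<Sum>i<n. X i \<omega>) - expectation (\<lambda>\<omega>. \<Sum>i<n. X i \<omega>))^2)
          \<le> (\<Sum>i<n. expectation (\<lambda>\<omega>. (X i \<omega>)^2))"
proof -
  have meas[measurable]: "X i \<in> borel_measurable M" for i
    using indep unfolding indep_vars_def by auto
  define c where "c i = expectation (X i)" for i
  define U where "U i \<omega> = X i \<omega> - c i" for i \<omega>
  have Umeas[measurable]: "U i \<in> borel_measurable M" for i unfolding U_def by measurable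
  have intX: "integrable M (X i)" for i
    by (rule integrable_const_bound[where B="B i"]) (use bnd in auto)
  have Ubnd: "\<bar>U i \<omega>\<bar> \<le> B i + \<bar>c i\<bar>" for i \<omega>
    using bnd[of i \<omega>] unfolding U_def by linarith
  have intU: "integrable M (U i)" for i
    by (rule integrable_const_bound[where B="B i + \<bar>c i\<bar>"]) (use Ubnd in auto)
  have intUU: "integrable M (\<lambda>\<omega>. U i \<omega> * U j \<omega>)" for i j
  proof (rule integrable_const_bound[where B="(B i + \<bar>c i\<bar>) * (B j + \<bar>c j\<bar>)"])
    show "AE x in M. norm (U i x * U j x) \<le> (B i + \<bar>c i\<bar>) * (B j + \<bar>c j\<bar>)"
      using Ubnd by (auto simp: abs_mult intro!: mult_mono order_trans[OF abs_ge_zero Ubnd])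
  qed measurable
  have EU: "expectation (U i) = 0" for i
    unfolding U_def c_def using intX[of i] prob_space by simp
  have indepU: "indep_vars (\<lambda>_. borel) U UNIV"
    unfolding U_def by (rule indep_vars_compose2[OF indep, of "\<lambda>i x. x - c i"]) measurable
  have cross: "expectation (\<lambda>\<omega>. U i \<omega> * U j \<omega>) = 0" if "i \<noteq> j" for i j
  proof -
    have "expectation (\<lambda>\<omega>. \<Prod>k\<in>{i,j}. U k \<omega>) = (\<Prod>k\<in>{i,j}. expectation (U k))"
      by (rule indep_vars_lebesgue_integral) (auto intro: indep_vars_subset[OF indepU] intU)
    then show ?thesis using that EU by simp
  qed
  have ES: "expectation (\<lambda>\<omega>. \<Sum>i<n. X i \<omega>) = (\<Sum>i<n. c i)"
    unfolding c_def by (simp add: intX)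
  have sq: "((\<Sum>i<n. X i \<omega>) - (\<Sum>i<n. c i))^2 = (\<Sum>i<n. \<Sum>j<n. U i \<omega> * U j \<omega>)" for \<omega>
  proof -
    have "(\<Sum>i<n. X i \<omega>) - (\<Sum>i<n. c i) = (\<Sum>i<n. U i \<omega>)"
      unfolding U_def by (simp add: sum_subtractf)
    then show ?thesis by (simp add: power2_eq_square sum_product)
  qed
  have "expectation (\<lambda>\<omega>. ((\<Sum>i<n. X i \<omega>) - expectation (\<lambda>\<omega>. \<Sum>i<n. X i \<omega>))^2)
      = (\<Sum>i<n. \<Sum>j<n. expectation (\<lambda>\<omega>. U i \<omega> * U j \<omega>))"
    unfolding ES sq by (simp add: integral_sum intUU integrable_sum)
  also have "\<dots> = (\<Sum>i<n. expectation (\<lambda>\<omega>. U i \<omega> * U i \<omega>))"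
  proof (rule sum.cong[OF refl])
    fix i assume i: "i \<in> {..<n}"
    have "(\<Sum>j<n. expectation (\<lambda>\<omega>. U i \<omega> * U j \<omega>)) = (\<Sum>j<n. if j = i then expectation (\<lambda>\<omega>. U i \<omega> * U i \<omega>) else 0)"
      by (rule sum.cong[OF refl]) (auto simp: cross)
    also have "\<dots> = expectation (\<lambda>\<omega>. U i \<omega> * U i \<omega>)" using i by simp
    finally show "(\<Sum>j<n. expectation (\<lambda>\<omega>. U i \<omega> * U j \<omega>)) = expectation (\<lambda>\<omega>. U i \<omega> * U i \<omega>)" .
  qed
  also have "\<dots> \<le> (\<Sum>i<n. expectation (\<lambda>\<omega>. (X i \<omega>)^2))"
  proof (rule sum_mono)
    fix i
    have sqb: "(X i \<omega>)^2 \<le> (B i)^2" for \<omega>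
      using power_mono[OF bnd[of i \<omega>] abs_ge_zero, of 2] by simp
    have intX2: "integrable M (\<lambda>\<omega>. (X i \<omega>)^2)"
      by (rule integrable_const_bound[where B="(B i)^2"]) (use sqb in auto)
    have e1: "(\<lambda>\<omega>. U i \<omega> * U i \<omega>) = (\<lambda>\<omega>. (X i \<omega>)^2 - 2 * c i * X i \<omega> + c i * c i)"
      unfolding U_def by (auto simp: power2_eq_square algebra_simps)
    have "expectation (\<lambda>\<omega>. U i \<omega> * U i \<omega>) = expectation (\<lambda>\<omega>. (X i \<omega>)^2) - 2 * c i * c i + c i * c i"
      unfolding e1 using intX2 intX[of i] prob_space by (simp add: c_def)
    also have "\<dots> \<le> expectation (\<lambda>\<omega>. (X i \<omega>)^2)" by simp
    finally show "expectation (\<lambda>\<omega>. U i \<omega> * U i \<omega>) \<le> expectation (\<lambda>\<omega>. (X i \<omega>)^2)" .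
  qed
  finally show ?thesis .
qed


lemma cesaro_nonneg_zero:
  fixes d :: "nat \<Rightarrow> real"
  assumes nn: "\<And>i. 0 \<le> d i" and lim: "d \<longlonglongrightarrow> 0"
  shows "(\<lambda>n. (\<Sum>i<n. d i) / real n) \<longlonglongrightarrow> 0"
proof (rule LIMSEQ_I)
  fix \<epsilon> :: real assume eps: "\<epsilon> > 0"
  have "eventually (\<lambda>i. d i < \<epsilon>/2) sequentially"
    using order_tendstoD(2)[OF lim, of "\<epsilon>/2"] eps by simp
  then obtain K where K: "\<And>i. i \<ge> K \<Longrightarrow> d i < \<epsilon>/2" unfolding eventually_sequentially by blast
  define C where "C = (\<Sum>i<K. d i)"
  have C0: "C \<ge> 0" unfolding C_def using nn by (simp add: sum_nonneg)
  obtain N :: nat where N: "2 * C / \<epsilon> < N" using reals_Archimedean2 by blast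
  show "\<exists>no. \<forall>n\<ge>no. norm ((\<Sum>i<n. d i) / real n - 0) < \<epsilon>"
  proof (intro exI[of _ "Suc N"] allI impI)
    fix n assume n: "Suc N \<le> n"
    have np: "real n > 0" using n by simp
    have dle: "d i \<le> (if i < K then d i else 0) + \<epsilon>/2" for i
      using K[of i] nn[of i] eps by (cases "i < K") auto
    have "(\<Sum>i<n. d i) \<le> (\<Sum>i<n. (if i < K then d i else 0) + \<epsilon>/2)"
      by (rule sum_mono) (rule dle)
    also have "\<dots> = (\<Sum>i<n. (if i < K then d i else 0)) + real n * (\<epsilon>/2)"
      by (simp add: sum.distrib)
    also have "(\<Sum>i<n. (if i < K then d i else 0)) = (\<Sum>i\<in>{..<n} \<inter> {..<K}. d i)"
      by (simp add: sum.inter_restrict[of "{..<n}" d "{..<K}"])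
    also have "\<dots> \<le> C" unfolding C_def by (rule sum_mono2) (use nn in auto)
    finally have s: "(\<Sum>i<n. d i) \<le> C + real n * (\<epsilon>/2)" by simp
    have "C < real n * (\<epsilon>/2)"
    proof -
      have "2 * C < real N * \<epsilon>" using N eps by (simp add: field_simps)
      also have "\<dots> \<le> real n * \<epsilon>" using n eps by simp
      finally show ?thesis by simp
    qed
    then have "(\<Sum>i<n. d i) < real n * \<epsilon>" using s by simp
    moreover have "(\<Sum>i<n. d i) \<ge> 0" using nn by (simp add: sum_nonneg)
    ultimately show "norm ((\<Sum>i<n. d i) / real n - 0) < \<epsilon>" using np by (simp add: field_simps)
  qed
qed


lemma count_bound:
  fixes z :: real assumes z: "z \<ge> 0"
  shows "(\<Sum>i. ennreal (if real i < z then 1 else 0)) \<le> ennreal (z + 1)"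
proof -
  define N where "N = nat \<lceil>z\<rceil>"
  have "(\<Sum>i. ennreal (if real i < z then 1 else 0)) = (\<Sum>i\<in>{..<N}. ennreal (if real i < z then 1 else 0))"
  proof (rule suminf_finite)
    fix i assume "i \<notin> {..<N}"
    then have "real i \<ge> z" unfolding N_def by (simp add: not_less)
    then show "ennreal (if real i < z then 1 else 0) = 0" by simp
  qed simp
  also have "\<dots> \<le> (\<Sum>i\<in>{..<N}. 1)" by (rule sum_mono) simp
  also have "\<dots> = ennreal (real N)" by (simp add: ennreal_of_nat_eq_real_of_nat)
  also have "\<dots> \<le> ennreal (z + 1)" unfolding N_def using z by (intro ennreal_leI) linarith
  finally show ?thesis .
qed

locale iid_nn = prob_space +
  fixes Z :: "nat \<Rightarrow> 'a \<Rightarrow> real"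
  assumes indep: "indep_vars (\<lambda>_. borel) Z UNIV"
    and nn: "\<And>i \<omega>. 0 \<le> Z i \<omega>"
    and dis: "\<And>i. distr M borel (Z i) = distr M borel (Z 0)"
    and int0: "integrable M (Z 0)"
begin

lemma measZ[measurable]: "Z i \<in> borel_measurable M"
  using indep unfolding indep_vars_def by auto

lemma integral_transfer:
  fixes f :: "real \<Rightarrow> real"
  assumes fm: "f \<in> borel_measurable borel"
  shows "expectation (\<lambda>\<omega>. f (Z i \<omega>)) = expectation (\<lambda>\<omega>. f (Z 0 \<omega>))"
proof -
  have e: "integral\<^sup>L (distr M borel (Z j)) f = expectation (\<lambda>\<omega>. f (Z j \<omega>))" for j
    by (rule integral_distr[OF measZ fm])
  have "expectation (\<lambda>\<omega>. f (Z i \<omega>)) = integral\<^sup>L (distr M borel (Z i)) f" by (rule e[symmetric])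
  also have "\<dots> = integral\<^sup>L (distr M borel (Z 0)) f" by (simp only: dis[of i])
  finally show ?thesis using e[of 0] by simp
qed

lemma prob_transfer:
  "measure M {\<omega>\<in>space M. t < Z i \<omega>} = measure M {\<omega>\<in>space M. t < Z 0 \<omega>}"
proof -
  have eq: "{\<omega>\<in>space M. t < Z j \<omega>} = Z j -` {t<..} \<inter> space M" for j by auto
  have "measure M {\<omega>\<in>space M. t < Z i \<omega>} = measure (distr M borel (Z i)) {t<..}"
    unfolding eq by (rule measure_distr[symmetric]) auto
  also have "\<dots> = measure (distr M borel (Z 0)) {t<..}" by (simp only: dis[of i])
  also have "\<dots> = measure M {\<omega>\<in>space M. t < Z 0 \<omega>}"
    unfolding eq by (rule measure_distr) auto
  finally show ?thesis .
qed

lemma stepA: "AE \<omega> in M. eventually (\<lambda>i. Z i \<omega> \<le> real i) sequentially"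
proof -
  define A where "A i = {\<omega>\<in>space M. real i < Z i \<omega>}" for i
  define A' where "A' i = {\<omega>\<in>space M. real i < Z 0 \<omega>}" for i
  have [measurable]: "A i \<in> sets M" for i unfolding A_def by measurable
  have [measurable]: "A' i \<in> sets M" for i unfolding A'_def by measurable
  have mA: "measure M (A i) = measure M (A' i)" for i unfolding A_def A'_def by (rule prob_transfer)
  have "(\<Sum>i. ennreal (measure M (A' i))) = (\<Sum>i. \<integral>\<^sup>+\<omega>. indicator (A' i) \<omega> \<partial>M)"
    by (simp add: emeasure_eq_measure)
  also have "\<dots> = (\<integral>\<^sup>+\<omega>. (\<Sum>i. indicator (A' i) \<omega>) \<partial>M)"
    by (rule nn_integral_suminf[symmetric]) measurable
  also have "\<dots> \<le> (\<integral>\<^sup>+\<omega>. ennreal (Z 0 \<omega> + 1) \<partial>M)"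
  proof (rule nn_integral_mono)
    fix \<omega> assume \<omega>: "\<omega> \<in> space M"
    have "(\<Sum>i. indicator (A' i) \<omega> :: ennreal) = (\<Sum>i. ennreal (if real i < Z 0 \<omega> then 1 else 0))"
      using \<omega> unfolding A'_def by (intro suminf_cong) (simp add: indicator_def)
    also have "\<dots> \<le> ennreal (Z 0 \<omega> + 1)" by (rule count_bound[OF nn])
    finally show "(\<Sum>i. indicator (A' i) \<omega> :: ennreal) \<le> ennreal (Z 0 \<omega> + 1)" .
  qed
  also have "\<dots> = ennreal (expectation (\<lambda>\<omega>. Z 0 \<omega> + 1))"
    by (rule nn_integral_eq_integral) (use int0 nn in \<open>auto intro!: AE_I2 add_nonneg_nonneg\<close>)
  also have "\<dots> < top" by simp
  finally have fin: "(\<Sum>i. ennreal (measure M (A' i))) \<noteq> top" by simp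
  have "summable (\<lambda>i. measure M (A' i))"
    by (rule summable_suminf_not_top[OF _ fin]) simp
  then have sA: "summable (\<lambda>i. measure M (A i))" by (simp add: mA)
  have "AE \<omega> in M. eventually (\<lambda>i. \<omega> \<in> space M - A i) sequentially"
    by (rule borel_cantelli_AE1) (auto simp: sA emeasure_eq_measure)
  then show ?thesis
    by (rule AE_mp) (auto intro!: AE_I2 elim!: eventually_mono simp: A_def not_less)
qed

end


definition trunc :: "(nat \<Rightarrow> 'a \<Rightarrow> real) \<Rightarrow> nat \<Rightarrow> 'a \<Rightarrow> real" where
  "trunc Z i \<omega> = (if Z i \<omega> \<le> real i then Z i \<omega> else 0)"

context iid_nn begin

lemma trunc_meas[measurable]: "trunc Z i \<in> borel_measurable M"
  unfolding trunc_def by measurable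

lemma trunc_bnd: "\<bar>trunc Z i \<omega>\<bar> \<le> real i"
  unfolding trunc_def using nn[of i \<omega>] by auto

lemma trunc_nn: "0 \<le> trunc Z i \<omega>"
  unfolding trunc_def using nn[of i \<omega>] by auto

lemma trunc_le: "trunc Z i \<omega> \<le> Z i \<omega>"
  unfolding trunc_def using nn[of i \<omega>] by auto

lemma trunc_int: "integrable M (trunc Z i)"
  by (rule integrable_const_bound[where B="real i"]) (use trunc_bnd in auto)

lemma indepT: "indep_vars (\<lambda>_. borel) (trunc Z) UNIV"
proof -
  have "indep_vars (\<lambda>_. borel) (\<lambda>i \<omega>. (\<lambda>z. if z \<le> real i then z else 0) (Z i \<omega>)) UNIV"
    by (rule indep_vars_compose2[OF indep]) measurable
  moreover have "(\<lambda>i \<omega>. (\<lambda>z. if z \<le> real i then z else 0) (Z i \<omega>)) = trunc Z"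
    by (intro ext) (simp add: trunc_def)
  ultimately show ?thesis by simp
qed

lemma ET: "expectation (trunc Z i) = expectation (\<lambda>\<omega>. if Z 0 \<omega> \<le> real i then Z 0 \<omega> else 0)"
proof -
  have "expectation (trunc Z i) = expectation (\<lambda>\<omega>. (\<lambda>z. if z \<le> real i then z else 0) (Z i \<omega>))"
    by (simp add: trunc_def[abs_def])
  also have "\<dots> = expectation (\<lambda>\<omega>. (\<lambda>z. if z \<le> real i then z else 0) (Z 0 \<omega>))"
    by (rule integral_transfer) measurable
  finally show ?thesis by simp
qed

lemma ET2: "expectation (\<lambda>\<omega>. (trunc Z i \<omega>)^2) = expectation (\<lambda>\<omega>. (if Z 0 \<omega> \<le> real i then Z 0 \<omega> else 0)^2)"
proof -
  have "expectation (\<lambda>\<omega>. (trunc Z i \<omega>)^2) = expectation (\<lambda>\<omega>. (\<lambda>z. (if z \<le> real i then z else 0)^2) (Z i \<omega>))"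
    by (simp add: trunc_def)
  also have "\<dots> = expectation (\<lambda>\<omega>. (\<lambda>z. (if z \<le> real i then z else 0)^2) (Z 0 \<omega>))"
    by (rule integral_transfer) measurable
  finally show ?thesis by simp
qed

lemma ET_lim: "(\<lambda>i. expectation (trunc Z i)) \<longlonglongrightarrow> expectation (Z 0)"
proof -
  have "(\<lambda>i. expectation (\<lambda>\<omega>. if Z 0 \<omega> \<le> real i then Z 0 \<omega> else 0)) \<longlonglongrightarrow> expectation (Z 0)"
  proof (rule integral_dominated_convergence[where w="Z 0"])
    show "AE x in M. (\<lambda>i. if Z 0 x \<le> real i then Z 0 x else 0) \<longlonglongrightarrow> Z 0 x"
    proof (rule AE_I2)
      fix x
      obtain N :: nat where "Z 0 x \<le> real N" using real_arch_simple by blast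
      then have "eventually (\<lambda>i. (if Z 0 x \<le> real i then Z 0 x else 0) = Z 0 x) sequentially"
        unfolding eventually_sequentially by (intro exI[of _ N]) auto
      then show "(\<lambda>i. if Z 0 x \<le> real i then Z 0 x else 0) \<longlonglongrightarrow> Z 0 x"
        by (rule tendsto_eventually)
    qed
    show "AE x in M. norm (if Z 0 x \<le> real i then Z 0 x else 0) \<le> Z 0 x" for i
      using nn by auto
  qed (use int0 in auto)
  then show ?thesis by (simp add: ET)
qed

lemma ET_le: "expectation (trunc Z i) \<le> expectation (Z 0)"
proof -
  have "integrable M (\<lambda>\<omega>. if Z 0 \<omega> \<le> real i then Z 0 \<omega> else 0)"
    by (rule integrable_const_bound[where B="real i"]) (use nn in auto)
  then have "expectation (\<lambda>\<omega>. if Z 0 \<omega> \<le> real i then Z 0 \<omega> else 0) \<le> expectation (Z 0)"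
    by (rule integral_mono[OF _ int0]) (use nn in auto)
  then show ?thesis by (simp add: ET)
qed

lemma ES_cesaro: "(\<lambda>n. (\<Sum>i<n. expectation (trunc Z i)) / real n) \<longlonglongrightarrow> expectation (Z 0)"
proof -
  define d where "d i = expectation (Z 0) - expectation (trunc Z i)" for i
  have "(\<lambda>n. (\<Sum>i<n. d i) / real n) \<longlonglongrightarrow> 0"
  proof (rule cesaro_nonneg_zero)
    show "0 \<le> d i" for i unfolding d_def using ET_le[of i] by simp
    have "(\<lambda>i. expectation (Z 0) - expectation (trunc Z i)) \<longlonglongrightarrow> expectation (Z 0) - expectation (Z 0)"
      by (intro tendsto_intros ET_lim)
    then show "d \<longlonglongrightarrow> 0" unfolding d_def by simp
  qed
  then have "(\<lambda>n. expectation (Z 0) - (\<Sum>i<n. d i) / real n) \<longlonglongrightarrow> expectation (Z 0) - 0"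
    by (intro tendsto_intros)
  moreover have "eventually (\<lambda>n. expectation (Z 0) - (\<Sum>i<n. d i) / real n
      = (\<Sum>i<n. expectation (trunc Z i)) / real n) sequentially"
    unfolding eventually_sequentially
  proof (intro exI[of _ 1] allI impI)
    fix n :: nat assume "1 \<le> n"
    then show "expectation (Z 0) - (\<Sum>i<n. d i) / real n = (\<Sum>i<n. expectation (trunc Z i)) / real n"
      unfolding d_def by (simp add: sum_subtractf field_simps)
  qed
  ultimately show ?thesis using Lim_transform_eventually by fastforce
qed

end

context iid_nn begin

lemma var_S_le:
  "expectation (\<lambda>\<omega>. ((\<Sum>i<n. trunc Z i \<omega>) - expectation (\<lambda>\<omega>. \<Sum>i<n. trunc Z i \<omega>))^2)
     \<le> real n * expectation (\<lambda>\<omega>. if Z 0 \<omega> \<le> real n then (Z 0 \<omega>)^2 else 0)"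
proof -
  have "expectation (\<lambda>\<omega>. ((\<Sum>i<n. trunc Z i \<omega>) - expectation (\<lambda>\<omega>. \<Sum>i<n. trunc Z i \<omega>))^2)
     \<le> (\<Sum>i<n. expectation (\<lambda>\<omega>. (trunc Z i \<omega>)^2))"
    by (rule var_sum_le[OF indepT trunc_bnd])
  also have "\<dots> \<le> (\<Sum>i<n. expectation (\<lambda>\<omega>. if Z 0 \<omega> \<le> real n then (Z 0 \<omega>)^2 else 0))"
  proof (rule sum_mono)
    fix i assume i: "i \<in> {..<n}"
    have b1: "\<bar>(if Z 0 \<omega> \<le> real i then Z 0 \<omega> else 0)^2\<bar> \<le> (real i)^2" for \<omega>
      using nn[of 0 \<omega>] by (auto intro: power_mono)
    have b2: "\<bar>if Z 0 \<omega> \<le> real n then (Z 0 \<omega>)^2 else 0\<bar> \<le> (real n)^2" for \<omega>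
      using nn[of 0 \<omega>] by (auto intro: power_mono)
    have i1: "integrable M (\<lambda>\<omega>. (if Z 0 \<omega> \<le> real i then Z 0 \<omega> else 0)^2)"
      by (rule integrable_const_bound[where B="(real i)^2"]) (use b1 in auto)
    have i2: "integrable M (\<lambda>\<omega>. if Z 0 \<omega> \<le> real n then (Z 0 \<omega>)^2 else 0)"
      by (rule integrable_const_bound[where B="(real n)^2"]) (use b2 in auto)
    have "expectation (\<lambda>\<omega>. (if Z 0 \<omega> \<le> real i then Z 0 \<omega> else 0)^2)
        \<le> expectation (\<lambda>\<omega>. if Z 0 \<omega> \<le> real n then (Z 0 \<omega>)^2 else 0)"
    proof (rule integral_mono[OF i1 i2])
      fix \<omega> show "(if Z 0 \<omega> \<le> real i then Z 0 \<omega> else 0)^2 \<le> (if Z 0 \<omega> \<le> real n then (Z 0 \<omega>)^2 else 0)"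
        using i by auto
    qed
    then show "expectation (\<lambda>\<omega>. (trunc Z i \<omega>)^2) \<le> expectation (\<lambda>\<omega>. if Z 0 \<omega> \<le> real n then (Z 0 \<omega>)^2 else 0)"
      by (simp add: ET2)
  qed
  also have "\<dots> = real n * expectation (\<lambda>\<omega>. if Z 0 \<omega> \<le> real n then (Z 0 \<omega>)^2 else 0)" by simp
  finally show ?thesis .
qed

lemma stepC_eps:
  assumes a: "a > 1" and eps: "\<epsilon> > 0"
  shows "AE \<omega> in M. eventually (\<lambda>m. \<bar>(\<Sum>i<kf a m. trunc Z i \<omega>) - (\<Sum>i<kf a m. expectation (trunc Z i))\<bar>
            < \<epsilon> * real (kf a m)) sequentially"
proof -
  define k where "k m = kf a m" for m
  have kpos: "real (k m) > 0" for m unfolding k_def using kf_ge1[of a m] a by simp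
  define B where "B m = {\<omega>\<in>space M. \<epsilon> * real (k m) \<le> \<bar>(\<Sum>i<k m. trunc Z i \<omega>) - (\<Sum>i<k m. expectation (trunc Z i))\<bar>}" for m
  have [measurable]: "B m \<in> sets M" for m unfolding B_def by measurable
  define g where "g m z = (if z \<le> real (k m) then z^2 / (\<epsilon>^2 * real (k m)) else 0)" for m z
  have gm[measurable]: "(\<lambda>\<omega>. g m (Z 0 \<omega>)) \<in> borel_measurable M" for m unfolding g_def by measurable
  have g_nn: "0 \<le> g m z" for m z unfolding g_def using kpos[of m] by auto
  have g_int: "integrable M (\<lambda>\<omega>. g m (Z 0 \<omega>))" for m
  proof (rule integrable_const_bound[where B="(real (k m))^2 / (\<epsilon>^2 * real (k m))"])
    show "AE x in M. norm (g m (Z 0 x)) \<le> (real (k m))^2 / (\<epsilon>^2 * real (k m))"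
    proof (rule AE_I2)
      fix x
      have "(if Z 0 x \<le> real (k m) then (Z 0 x)^2 else 0) \<le> (real (k m))^2"
        using nn[of 0 x] by (auto intro: power_mono)
      then show "norm (g m (Z 0 x)) \<le> (real (k m))^2 / (\<epsilon>^2 * real (k m))"
        unfolding g_def using kpos[of m] eps g_nn[of m "Z 0 x"] by (auto intro: divide_right_mono)
    qed
  qed measurable
  have probB: "measure M (B m) \<le> expectation (\<lambda>\<omega>. g m (Z 0 \<omega>))" for m
  proof -
    define f where "f \<omega> = (\<Sum>i<k m. trunc Z i \<omega>)" for \<omega>
    have [measurable]: "f \<in> borel_measurable M" unfolding f_def by measurable
    have Ef: "expectation f = (\<Sum>i<k m. expectation (trunc Z i))"
      unfolding f_def by (simp add: trunc_int)
    have fb: "\<bar>f \<omega>\<bar> \<le> (\<Sum>i<k m. real i)" for \<omega>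
      unfolding f_def by (rule order_trans[OF sum_abs sum_mono[OF trunc_bnd]])
    have fsq: "(f \<omega>)^2 \<le> (\<Sum>i<k m. real i)^2" for \<omega>
      using power_mono[OF fb[of \<omega>] abs_ge_zero, of 2] by simp
    have f2: "integrable M (\<lambda>\<omega>. (f \<omega>)^2)"
      by (rule integrable_const_bound[where B="(\<Sum>i<k m. real i)^2"]) (use fsq in auto)
    have "measure M (B m) = prob {\<omega>\<in>space M. \<bar>f \<omega> - expectation f\<bar> \<ge> \<epsilon> * real (k m)}"
      unfolding B_def Ef f_def by simp
    also have "\<dots> \<le> variance f / (\<epsilon> * real (k m))^2"
      by (rule Chebyshev_inequality) (use f2 eps kpos[of m] in auto)
    also have "\<dots> \<le> (real (k m) * expectation (\<lambda>\<omega>. if Z 0 \<omega> \<le> real (k m) then (Z 0 \<omega>)^2 else 0)) / (\<epsilon> * real (k m))^2"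
      unfolding f_def by (rule divide_right_mono[OF var_S_le]) simp
    also have "\<dots> = expectation (\<lambda>\<omega>. if Z 0 \<omega> \<le> real (k m) then (Z 0 \<omega>)^2 else 0) / (\<epsilon>^2 * real (k m))"
      using kpos[of m] eps by (simp add: power2_eq_square field_simps)
    also have "\<dots> = expectation (\<lambda>\<omega>. g m (Z 0 \<omega>))"
    proof -
      have "(\<lambda>\<omega>. g m (Z 0 \<omega>)) = (\<lambda>\<omega>. (if Z 0 \<omega> \<le> real (k m) then (Z 0 \<omega>)^2 else 0) / (\<epsilon>^2 * real (k m)))"
        unfolding g_def by auto
      then show ?thesis by (simp only: integral_divide_zero)
    qed
    finally show ?thesis .
  qed
  have "(\<Sum>m. ennreal (expectation (\<lambda>\<omega>. g m (Z 0 \<omega>)))) = (\<Sum>m. \<integral>\<^sup>+\<omega>. ennreal (g m (Z 0 \<omega>)) \<partial>M)"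
    by (intro suminf_cong nn_integral_eq_integral[symmetric] g_int AE_I2 g_nn)
  also have "\<dots> = (\<integral>\<^sup>+\<omega>. (\<Sum>m. ennreal (g m (Z 0 \<omega>))) \<partial>M)"
    by (rule nn_integral_suminf[symmetric]) measurable
  also have "\<dots> \<le> (\<integral>\<^sup>+\<omega>. ennreal (2 * a / ((a - 1) * \<epsilon>^2) * Z 0 \<omega>) \<partial>M)"
  proof (rule nn_integral_mono)
    fix \<omega>
    show "(\<Sum>m. ennreal (g m (Z 0 \<omega>))) \<le> ennreal (2 * a / ((a - 1) * \<epsilon>^2) * Z 0 \<omega>)"
      unfolding g_def k_def by (rule series_bound[OF a nn]) (use eps in simp)
  qed
  also have "\<dots> = ennreal (expectation (\<lambda>\<omega>. 2 * a / ((a - 1) * \<epsilon>^2) * Z 0 \<omega>))"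
    by (rule nn_integral_eq_integral) (use int0 nn a eps in \<open>auto intro!: AE_I2\<close>)
  also have "\<dots> < top" by simp
  finally have "(\<Sum>m. ennreal (expectation (\<lambda>\<omega>. g m (Z 0 \<omega>)))) \<noteq> top" by simp
  then have sg: "summable (\<lambda>m. expectation (\<lambda>\<omega>. g m (Z 0 \<omega>)))"
    by (rule summable_suminf_not_top[rotated]) (use g_nn in \<open>auto intro: integral_nonneg_AE\<close>)
  have sB: "summable (\<lambda>m. measure M (B m))"
    by (rule summable_comparison_test'[OF sg, of 0]) (use probB in auto)
  have "AE \<omega> in M. eventually (\<lambda>m. \<omega> \<in> space M - B m) sequentially"
    by (rule borel_cantelli_AE1) (auto simp: sB emeasure_eq_measure)
  then show ?thesis
    by (rule AE_mp) (auto intro!: AE_I2 elim!: eventually_mono simp: B_def k_def not_le)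
qed

end

context iid_nn begin

lemma stepC:
  assumes a: "a > 1"
  shows "AE \<omega> in M. (\<lambda>m. (\<Sum>i<kf a m. trunc Z i \<omega>) / real (kf a m)) \<longlonglongrightarrow> expectation (Z 0)"
proof -
  have "AE \<omega> in M. \<forall>j::nat. eventually (\<lambda>m. \<bar>(\<Sum>i<kf a m. trunc Z i \<omega>) - (\<Sum>i<kf a m. expectation (trunc Z i))\<bar>
            < (1 / real (Suc j)) * real (kf a m)) sequentially"
    unfolding AE_all_countable by (intro allI stepC_eps[OF a]) simp
  then show ?thesis
  proof (rule AE_mp, intro AE_I2 impI)
    fix \<omega>
    assume H: "\<forall>j::nat. eventually (\<lambda>m. \<bar>(\<Sum>i<kf a m. trunc Z i \<omega>) - (\<Sum>i<kf a m. expectation (trunc Z i))\<bar>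
            < (1 / real (Suc j)) * real (kf a m)) sequentially"
    have kpos: "real (kf a m) > 0" for m using kf_ge1[of a m] a by simp
    have d0: "(\<lambda>m. (\<Sum>i<kf a m. trunc Z i \<omega>) / real (kf a m) - (\<Sum>i<kf a m. expectation (trunc Z i)) / real (kf a m)) \<longlonglongrightarrow> 0"
    proof (rule LIMSEQ_I)
      fix r :: real assume r: "r > 0"
      obtain j :: nat where j: "1 / r < real (Suc j)"
        using reals_Archimedean2[of "1/r"] by (metis of_nat_Suc less_trans lessI of_nat_less_iff)
      have jr: "1 / real (Suc j) < r" using j r by (simp add: field_simps)
      from H[rule_format, of j] obtain N where N: "\<And>m. m \<ge> N \<Longrightarrow> \<bar>(\<Sum>i<kf a m. trunc Z i \<omega>) - (\<Sum>i<kf a m. expectation (trunc Z i))\<bar>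
            < (1 / real (Suc j)) * real (kf a m)" unfolding eventually_sequentially by blast
      show "\<exists>no. \<forall>m\<ge>no. norm ((\<Sum>i<kf a m. trunc Z i \<omega>) / real (kf a m) - (\<Sum>i<kf a m. expectation (trunc Z i)) / real (kf a m) - 0) < r"
      proof (intro exI[of _ N] allI impI)
        fix m assume m: "m \<ge> N"
        have "norm ((\<Sum>i<kf a m. trunc Z i \<omega>) / real (kf a m) - (\<Sum>i<kf a m. expectation (trunc Z i)) / real (kf a m) - 0)
            = \<bar>(\<Sum>i<kf a m. trunc Z i \<omega>) - (\<Sum>i<kf a m. expectation (trunc Z i))\<bar> / real (kf a m)"
          using kpos[of m] by (simp add: diff_divide_distrib[symmetric])
        also have "\<dots> < 1 / real (Suc j)"
          using N[OF m] kpos[of m] by (simp add: divide_less_eq)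
        also have "\<dots> < r" by (rule jr)
        finally show "norm ((\<Sum>i<kf a m. trunc Z i \<omega>) / real (kf a m) - (\<Sum>i<kf a m. expectation (trunc Z i)) / real (kf a m) - 0) < r" .
      qed
    qed
    have e0: "(\<lambda>m. (\<Sum>i<kf a m. expectation (trunc Z i)) / real (kf a m)) \<longlonglongrightarrow> expectation (Z 0)"
      using filterlim_compose[OF ES_cesaro kf_at_top[OF a]] by (simp add: o_def)
    have "(\<lambda>m. ((\<Sum>i<kf a m. trunc Z i \<omega>) / real (kf a m) - (\<Sum>i<kf a m. expectation (trunc Z i)) / real (kf a m))
          + (\<Sum>i<kf a m. expectation (trunc Z i)) / real (kf a m)) \<longlonglongrightarrow> 0 + expectation (Z 0)"
      by (rule tendsto_add[OF d0 e0])
    then show "(\<lambda>m. (\<Sum>i<kf a m. trunc Z i \<omega>) / real (kf a m)) \<longlonglongrightarrow> expectation (Z 0)" by simp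
  qed
qed

theorem slln: "AE \<omega> in M. (\<lambda>n. 1 / real n * (\<Sum>i<n. Z i \<omega>)) \<longlonglongrightarrow> expectation (Z 0)"
proof -
  have "AE \<omega> in M. \<forall>r::nat. (\<lambda>m. (\<Sum>i<kf (1 + 1 / Suc r) m. trunc Z i \<omega>) / real (kf (1 + 1 / Suc r) m)) \<longlonglongrightarrow> expectation (Z 0)"
    unfolding AE_all_countable by (intro allI stepC) simp
  moreover note stepA
  ultimately show ?thesis
  proof (elim AE_mp, intro AE_I2 impI)
    fix \<omega>
    assume A: "eventually (\<lambda>i. Z i \<omega> \<le> real i) sequentially"
      and C: "\<forall>r::nat. (\<lambda>m. (\<Sum>i<kf (1 + 1 / Suc r) m. trunc Z i \<omega>) / real (kf (1 + 1 / Suc r) m)) \<longlonglongrightarrow> expectation (Z 0)"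
    define s where "s n = (\<Sum>i<n. trunc Z i \<omega>)" for n
    have mu: "expectation (Z 0) \<ge> 0" using nn by (simp add: integral_nonneg_AE)
    have sl: "(\<lambda>n. s n / real n) \<longlonglongrightarrow> expectation (Z 0)"
    proof (rule interp)
      show "0 \<le> s n" for n unfolding s_def by (simp add: sum_nonneg trunc_nn)
      show "s n \<le> s (Suc n)" for n unfolding s_def by (simp add: trunc_nn)
      show "(\<lambda>m. s (kf (1 + 1 / real (Suc r)) m) / real (kf (1 + 1 / real (Suc r)) m)) \<longlonglongrightarrow> expectation (Z 0)" for r
        using C unfolding s_def by simp
    qed (rule mu)
    from A obtain N where N: "\<And>i. i \<ge> N \<Longrightarrow> Z i \<omega> \<le> real i" unfolding eventually_sequentially by blast
    define dd where "dd i = Z i \<omega> - trunc Z i \<omega>" for i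
    define C0 where "C0 = (\<Sum>i<N. dd i)"
    have dd: "dd i = (if i < N then dd i else 0)" for i
      using N[of i] unfolding dd_def trunc_def by auto
    have eqn: "1 / real n * (\<Sum>i<n. Z i \<omega>) = s n / real n + C0 / real n" if n: "n \<ge> N" for n
    proof -
      have "(\<Sum>i<n. dd i) = (\<Sum>i<n. (if i < N then dd i else 0))" by (subst dd) simp
      also have "\<dots> = (\<Sum>i\<in>{..<n} \<inter> {..<N}. dd i)" by (simp add: sum.inter_restrict[of "{..<n}" dd "{..<N}"])
      also have "{..<n} \<inter> {..<N} = {..<N}" using n by auto
      finally have "(\<Sum>i<n. dd i) = C0" unfolding C0_def .
      then have "(\<Sum>i<n. Z i \<omega>) = s n + C0" unfolding s_def dd_def by (simp add: sum_subtractf)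
      then show ?thesis by (simp add: add_divide_distrib)
    qed
    have "(\<lambda>n. s n / real n + C0 / real n) \<longlonglongrightarrow> expectation (Z 0) + 0"
      by (intro tendsto_add sl lim_const_over_n)
    then have "(\<lambda>n. s n / real n + C0 / real n) \<longlonglongrightarrow> expectation (Z 0)" by simp
    moreover have "eventually (\<lambda>n. s n / real n + C0 / real n = 1 / real n * (\<Sum>i<n. Z i \<omega>)) sequentially"
      unfolding eventually_sequentially using eqn by (intro exI[of _ N]) auto
    ultimately show "(\<lambda>n. 1 / real n * (\<Sum>i<n. Z i \<omega>)) \<longlonglongrightarrow> expectation (Z 0)"
      by (rule Lim_transform_eventually)
  qed
qed

end

lemma maxterm_0: "maxterm 0 x v = \<bar>x 0\<bar>"
  unfolding maxterm_def by simp

lemma maxterm_Suc: "maxterm (Suc d) x v = max (maxterm d x v) (\<bar>x (Suc d)\<bar> * v (Suc d))"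
proof -
  have e: "{1..Suc d} = insert (Suc d) {1..d}" by auto
  have "insert \<bar>x 0\<bar> ((\<lambda>j. \<bar>x j\<bar> * v j) ` {1..Suc d})
      = insert (\<bar>x (Suc d)\<bar> * v (Suc d)) (insert \<bar>x 0\<bar> ((\<lambda>j. \<bar>x j\<bar> * v j) ` {1..d}))"
    unfolding e by auto
  then show ?thesis unfolding maxterm_def by (simp add: max.commute)
qed

lemma maxterm_cong:
  assumes "\<And>j. j \<in> {1..d} \<Longrightarrow> v j = w j" "\<And>k. k \<le> d \<Longrightarrow> x k = y k"
  shows "maxterm d x v = maxterm d y w"
proof -
  have "(\<lambda>j. \<bar>x j\<bar> * v j) ` {1..d} = (\<lambda>j. \<bar>y j\<bar> * w j) ` {1..d}"
    using assms by (intro image_cong) auto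
  then show ?thesis unfolding maxterm_def using assms(2)[of 0] by simp
qed

lemma maxterm_nn: "0 \<le> maxterm d x v"
proof -
  have "\<bar>x 0\<bar> \<le> maxterm d x v" unfolding maxterm_def by (rule Max_ge) auto
  then show ?thesis by linarith
qed

lemma max_lip: "\<bar>max (a::real) b - max a' b'\<bar> \<le> max \<bar>a - a'\<bar> \<bar>b - b'\<bar>"
  by (simp add: max_def abs_if)

lemma maxterm_lip:
  assumes "\<And>k. k \<le> d \<Longrightarrow> \<bar>x k - y k\<bar> \<le> \<delta>"
  shows "\<bar>maxterm d x v - maxterm d y v\<bar> \<le> \<delta> * (1 + (\<Sum>j\<in>{1..d}. \<bar>v j\<bar>))"
  using assms
proof (induction d)
  case 0
  have "\<bar>\<bar>x 0\<bar> - \<bar>y 0\<bar>\<bar> \<le> \<delta>" using 0[of 0] by linarith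
  then show ?case by (simp add: maxterm_0)
next
  case (Suc d)
  have d0: "\<delta> \<ge> 0" using Suc.prems[of 0] by linarith
  have ih: "\<bar>maxterm d x v - maxterm d y v\<bar> \<le> \<delta> * (1 + (\<Sum>j\<in>{1..d}. \<bar>v j\<bar>))"
    using Suc.IH Suc.prems by auto
  have "\<bar>\<bar>x (Suc d)\<bar> * v (Suc d) - \<bar>y (Suc d)\<bar> * v (Suc d)\<bar> = \<bar>\<bar>x (Suc d)\<bar> - \<bar>y (Suc d)\<bar>\<bar> * \<bar>v (Suc d)\<bar>"
    by (simp add: left_diff_distrib[symmetric] abs_mult)
  also have "\<dots> \<le> \<delta> * \<bar>v (Suc d)\<bar>"
    using Suc.prems[of "Suc d"] by (intro mult_right_mono) auto
  finally have t: "\<bar>\<bar>x (Suc d)\<bar> * v (Suc d) - \<bar>y (Suc d)\<bar> * v (Suc d)\<bar> \<le> \<delta> * \<bar>v (Suc d)\<bar>" .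
  have s: "(\<Sum>j\<in>{1..Suc d}. \<bar>v j\<bar>) = (\<Sum>j\<in>{1..d}. \<bar>v j\<bar>) + \<bar>v (Suc d)\<bar>"
    by (simp add: sum.atLeast_Suc_atMost_Suc_shift sum.cl_ivl_Suc)
  have p1: "0 \<le> \<delta> * (\<Sum>j\<in>{1..d}. \<bar>v j\<bar>)" using d0 by (simp add: sum_nonneg)
  have p2: "0 \<le> \<delta> * \<bar>v (Suc d)\<bar>" using d0 by simp
  have "\<bar>maxterm (Suc d) x v - maxterm (Suc d) y v\<bar>
      \<le> max \<bar>maxterm d x v - maxterm d y v\<bar> \<bar>\<bar>x (Suc d)\<bar> * v (Suc d) - \<bar>y (Suc d)\<bar> * v (Suc d)\<bar>"
    unfolding maxterm_Suc by (rule max_lip)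
  also have "\<dots> \<le> \<delta> * (1 + (\<Sum>j\<in>{1..Suc d}. \<bar>v j\<bar>))"
    unfolding s using ih t p1 p2 d0 by (intro max.boundedI) (simp_all add: algebra_simps)
  finally show ?case .
qed

lemma maxterm_meas:
  assumes "d' \<le> d"
  shows "(\<lambda>v. maxterm d' x v) \<in> borel_measurable (PiM {1..d} (\<lambda>_. borel))"
  using assms
proof (induction d')
  case 0
  then show ?case by (simp add: maxterm_0)
next
  case (Suc d')
  have [measurable]: "(\<lambda>v. maxterm d' x v) \<in> borel_measurable (PiM {1..d} (\<lambda>_. borel))"
    using Suc by simp
  have [measurable]: "(\<lambda>v. v (Suc d')) \<in> borel_measurable (PiM {1..d} (\<lambda>_. borel))"
    using Suc.prems by (intro measurable_component_singleton) auto
  show ?case unfolding maxterm_Suc by measurable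
qed


lemma iid_from_Y:
  fixes M :: "'a measure" and d :: nat
    and X :: "nat \<Rightarrow> 'a \<Rightarrow> real"
    and Y :: "nat \<Rightarrow> nat \<Rightarrow> 'a \<Rightarrow> real"
    and \<phi> :: "(nat \<Rightarrow> real) \<Rightarrow> real"
  assumes P: "prob_space M"
    and Y_meas: "\<And>i j. j \<in> {1..d} \<Longrightarrow> Y i j \<in> borel_measurable M"
    and Y_indep: "prob_space.indep_vars M (\<lambda>_. PiM {1..d} (\<lambda>_. borel))
                    (\<lambda>i \<omega>. \<lambda>j\<in>{1..d}. Y i j \<omega>) UNIV"
    and Y_distr: "\<And>i. distr M (PiM {1..d} (\<lambda>_. borel)) (\<lambda>\<omega>. \<lambda>j\<in>{1..d}. Y i j \<omega>)
                     = distr M (PiM {1..d} (\<lambda>_. borel)) (\<lambda>\<omega>. \<lambda>j\<in>{1..d}. X j \<omega>)"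
    and X_meas: "\<And>j. j \<in> {1..d} \<Longrightarrow> X j \<in> borel_measurable M"
    and phim: "\<phi> \<in> borel_measurable (PiM {1..d} (\<lambda>_. borel))"
    and phinn: "\<And>v. 0 \<le> \<phi> v"
    and phiint: "integrable M (\<lambda>\<omega>. \<phi> (\<lambda>j\<in>{1..d}. X j \<omega>))"
  shows "AE \<omega> in M. (\<lambda>n. 1 / real n * (\<Sum>i<n. \<phi> (\<lambda>j\<in>{1..d}. Y i j \<omega>)))
            \<longlonglongrightarrow> (\<integral>\<omega>. \<phi> (\<lambda>j\<in>{1..d}. X j \<omega>) \<partial>M)"
proof -
  interpret prob_space M by (rule P)
  define PM where "PM = PiM {1..d} (\<lambda>_. borel :: real measure)"
  define Yv where "Yv i \<omega> = (\<lambda>j\<in>{1..d}. Y i j \<omega>)" for i \<omega>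
  define Xv where "Xv \<omega> = (\<lambda>j\<in>{1..d}. X j \<omega>)" for \<omega>
  have Yvm: "Yv i \<in> measurable M PM" for i
    unfolding Yv_def PM_def by (rule measurable_restrict) (rule Y_meas)
  have Xvm: "Xv \<in> measurable M PM"
    unfolding Xv_def PM_def by (rule measurable_restrict) (rule X_meas)
  have phim': "\<phi> \<in> measurable PM borel" using phim unfolding PM_def .
  have Yd: "distr M PM (Yv i) = distr M PM Xv" for i
    using Y_distr[of i] unfolding PM_def Yv_def Xv_def by simp
  define Zp where "Zp i \<omega> = \<phi> (Yv i \<omega>)" for i \<omega>
  have disZ: "distr M borel (Zp i) = distr (distr M PM Xv) borel \<phi>" for i
  proof -
    have "distr M borel (Zp i) = distr M borel (\<phi> \<circ> Yv i)" unfolding Zp_def o_def by simp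
    also have "\<dots> = distr (distr M PM (Yv i)) borel \<phi>" by (rule distr_distr[symmetric, OF phim' Yvm])
    also have "\<dots> = distr (distr M PM Xv) borel \<phi>" by (simp only: Yd[of i])
    finally show ?thesis .
  qed
  have intZ: "integrable M (Zp 0)"
  proof -
    have "integrable (distr M PM Xv) \<phi>" using integrable_distr_eq[OF Xvm phim'] phiint unfolding Xv_def by simp
    then have "integrable (distr M PM (Yv 0)) \<phi>" by (simp only: Yd[of 0])
    then show ?thesis using integrable_distr_eq[OF Yvm phim'] unfolding Zp_def by simp
  qed
  have EZ: "expectation (Zp 0) = (\<integral>\<omega>. \<phi> (\<lambda>j\<in>{1..d}. X j \<omega>) \<partial>M)"
  proof -
    have "expectation (Zp 0) = integral\<^sup>L (distr M PM (Yv 0)) \<phi>"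
      unfolding Zp_def by (rule integral_distr[OF Yvm phim', symmetric])
    also have "\<dots> = integral\<^sup>L (distr M PM Xv) \<phi>" by (simp only: Yd[of 0])
    also have "\<dots> = (\<integral>\<omega>. \<phi> (Xv \<omega>) \<partial>M)" by (rule integral_distr[OF Xvm phim'])
    finally show ?thesis unfolding Xv_def .
  qed
  have indepZ: "indep_vars (\<lambda>_. borel) Zp UNIV"
  proof -
    have "indep_vars (\<lambda>_. borel) (\<lambda>i \<omega>. \<phi> (Yv i \<omega>)) UNIV"
      by (rule indep_vars_compose2[OF Y_indep[folded Yv_def PM_def]]) (rule phim')
    then show ?thesis unfolding Zp_def .
  qed
  have "iid_nn M Zp"
  proof (intro iid_nn.intro iid_nn_axioms.intro P indepZ intZ)
    show "0 \<le> Zp i \<omega>" for i \<omega> unfolding Zp_def by (rule phinn)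
    show "distr M borel (Zp i) = distr M borel (Zp 0)" for i by (simp only: disZ)
  qed
  from iid_nn.slln[OF this] show ?thesis unfolding EZ Zp_def Yv_def .
qed


lemma maxterm_zero: "maxterm d (\<lambda>_. 0) v = 0"
  by (induction d) (simp_all add: maxterm_0 maxterm_Suc)

lemma emp_lip:
  assumes "\<And>k. k \<le> d \<Longrightarrow> \<bar>x k - y k\<bar> \<le> \<delta>"
  shows "\<bar>emp_norm Y d n x \<omega> - emp_norm Y d n y \<omega>\<bar>
          \<le> \<delta> * (1 / real n * (\<Sum>i<n. 1 + (\<Sum>j\<in>{1..d}. \<bar>Y i j \<omega>\<bar>)))"
proof -
  have "emp_norm Y d n x \<omega> - emp_norm Y d n y \<omega>
      = 1 / real n * (\<Sum>i<n. maxterm d x (\<lambda>j. Y i j \<omega>) - maxterm d y (\<lambda>j. Y i j \<omega>))"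
    unfolding emp_norm_def by (simp add: sum_subtractf right_diff_distrib)
  also have "\<bar>\<dots>\<bar> = 1 / real n * \<bar>\<Sum>i<n. maxterm d x (\<lambda>j. Y i j \<omega>) - maxterm d y (\<lambda>j. Y i j \<omega>)\<bar>"
    by (simp add: abs_mult)
  also have "\<dots> \<le> 1 / real n * (\<Sum>i<n. \<delta> * (1 + (\<Sum>j\<in>{1..d}. \<bar>Y i j \<omega>\<bar>)))"
    by (intro mult_left_mono order_trans[OF sum_abs] sum_mono maxterm_lip assms) auto
  also have "\<dots> = \<delta> * (1 / real n * (\<Sum>i<n. 1 + (\<Sum>j\<in>{1..d}. \<bar>Y i j \<omega>\<bar>)))"
    by (simp add: sum_distrib_left)
  finally show ?thesis .
qed


theorem theorem3p3:
  fixes M :: "'a measure" and d :: nat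
    and X :: "nat \<Rightarrow> 'a \<Rightarrow> real"
    and Y :: "nat \<Rightarrow> nat \<Rightarrow> 'a \<Rightarrow> real"
    and x0 :: "nat \<Rightarrow> real"
  assumes P: "prob_space M"
    and H_nonneg: "\<And>j. j \<in> {1..d} \<Longrightarrow> AE \<omega> in M. X j \<omega> \<ge> 0"
    and H_int: "\<And>j. j \<in> {1..d} \<Longrightarrow> integrable M (X j)"
    and H_pos: "\<And>j. j \<in> {1..d} \<Longrightarrow> (\<integral>\<omega>. X j \<omega> \<partial>M) > 0"
    and Y_meas: "\<And>i j. j \<in> {1..d} \<Longrightarrow> Y i j \<in> borel_measurable M"
    and Y_indep: "prob_space.indep_vars M (\<lambda>_. PiM {1..d} (\<lambda>_. borel))
                    (\<lambda>i \<omega>. \<lambda>j\<in>{1..d}. Y i j \<omega>) UNIV"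
    and Y_distr: "\<And>i. distr M (PiM {1..d} (\<lambda>_. borel)) (\<lambda>\<omega>. \<lambda>j\<in>{1..d}. Y i j \<omega>)
                     = distr M (PiM {1..d} (\<lambda>_. borel)) (\<lambda>\<omega>. \<lambda>j\<in>{1..d}. X j \<omega>)"
    and x0_nonneg: "\<And>k. k \<in> {0..d} \<Longrightarrow> x0 k \<ge> 0"
  shows "AE \<omega> in M.
           (\<lambda>n. SUP x\<in>{x. \<forall>k\<in>{0..d}. 0 \<le> x k \<and> x k \<le> x0 k}.
                   \<bar>emp_norm Y d n x \<omega> - F_norm M X d x\<bar>) \<longlonglongrightarrow> 0"
proof -
  interpret prob_space M by (rule P)
  have X_meas: "X j \<in> borel_measurable M" if "j \<in> {1..d}" for j
    using H_int[OF that] by (rule borel_measurable_integrable)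
  have Xvm: "(\<lambda>\<omega>. \<lambda>j\<in>{1..d}. X j \<omega>) \<in> measurable M (PiM {1..d} (\<lambda>_. borel))"
    by (rule measurable_restrict) (rule X_meas)
  define L where "L v = 1 + (\<Sum>j\<in>{1..d}. \<bar>v j\<bar>)" for v :: "nat \<Rightarrow> real"
  have Lm: "L \<in> borel_measurable (PiM {1..d} (\<lambda>_. borel))"
    unfolding L_def by measurable
  have Lres: "L (\<lambda>j\<in>{1..d}. f j) = 1 + (\<Sum>j\<in>{1..d}. \<bar>f j\<bar>)" for f :: "nat \<Rightarrow> real"
    unfolding L_def by (simp add: sum.cong[OF refl, of "{1..d}"])
  have Lint: "integrable M (\<lambda>\<omega>. 1 + (\<Sum>j\<in>{1..d}. \<bar>X j \<omega>\<bar>))"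
  proof (rule Bochner_Integration.integrable_add)
    show "integrable M (\<lambda>\<omega>. \<Sum>j\<in>{1..d}. \<bar>X j \<omega>\<bar>)"
      by (rule Bochner_Integration.integrable_sum) (rule Bochner_Integration.integrable_abs, rule H_int, assumption)
  qed simp
  define EL where "EL = (\<integral>\<omega>. 1 + (\<Sum>j\<in>{1..d}. \<bar>X j \<omega>\<bar>) \<partial>M)"
  have EL0: "EL \<ge> 0" unfolding EL_def by (intro integral_nonneg_AE AE_I2) (simp add: sum_nonneg add_nonneg_nonneg)
  have convL: "AE \<omega> in M. (\<lambda>n. 1 / real n * (\<Sum>i<n. 1 + (\<Sum>j\<in>{1..d}. \<bar>Y i j \<omega>\<bar>))) \<longlonglongrightarrow> EL"
  proof -
    have "AE \<omega> in M. (\<lambda>n. 1 / real n * (\<Sum>i<n. L (\<lambda>j\<in>{1..d}. Y i j \<omega>)))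
            \<longlonglongrightarrow> (\<integral>\<omega>. L (\<lambda>j\<in>{1..d}. X j \<omega>) \<partial>M)"
    proof (rule iid_from_Y[OF P Y_meas Y_indep Y_distr X_meas Lm])
      show "integrable M (\<lambda>\<omega>. L (\<lambda>j\<in>{1..d}. X j \<omega>))" unfolding Lres by (rule Lint)
    qed (auto simp: L_def intro!: add_nonneg_nonneg sum_nonneg)
    then show ?thesis unfolding Lres EL_def .
  qed
  have mxm: "(\<lambda>\<omega>. maxterm d x (\<lambda>j. X j \<omega>)) \<in> borel_measurable M" for x
  proof -
    have "(\<lambda>\<omega>. maxterm d x (\<lambda>j\<in>{1..d}. X j \<omega>)) \<in> borel_measurable M"
      by (rule measurable_compose[OF Xvm maxterm_meas]) simp
    moreover have "maxterm d x (\<lambda>j\<in>{1..d}. X j \<omega>) = maxterm d x (\<lambda>j. X j \<omega>)" for \<omega>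
      by (rule maxterm_cong) auto
    ultimately show ?thesis by simp
  qed
  have mx_int: "integrable M (\<lambda>\<omega>. maxterm d x (\<lambda>j. X j \<omega>))" for x
  proof -
    define c where "c = (\<Sum>k\<le>d. \<bar>x k\<bar>)"
    have c: "\<bar>x k - 0\<bar> \<le> c" if "k \<le> d" for k
      unfolding c_def using that member_le_sum[of k "{..d}" "\<lambda>k. \<bar>x k\<bar>"] by simp
    have b: "\<bar>maxterm d x v\<bar> \<le> c * (1 + (\<Sum>j\<in>{1..d}. \<bar>v j\<bar>))" for v
      using maxterm_lip[of d x "\<lambda>_. 0" c v] c by (simp add: maxterm_zero)
    show ?thesis
    proof (rule Bochner_Integration.integrable_bound[OF Bochner_Integration.integrable_mult_right[OF Lint, of c] mxm])
      show "AE \<omega> in M. norm (maxterm d x (\<lambda>j. X j \<omega>)) \<le> norm (c * (1 + (\<Sum>j\<in>{1..d}. \<bar>X j \<omega>\<bar>)))"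
        using b by (auto intro!: AE_I2 order_trans[OF _ abs_ge_self])
    qed
  qed
  have convx: "AE \<omega> in M. (\<lambda>n. emp_norm Y d n x \<omega>) \<longlonglongrightarrow> F_norm M X d x" for x
  proof -
    have r: "maxterm d x (\<lambda>j\<in>{1..d}. f j) = maxterm d x f" for f
      by (rule maxterm_cong) auto
    have "AE \<omega> in M. (\<lambda>n. 1 / real n * (\<Sum>i<n. maxterm d x (\<lambda>j\<in>{1..d}. Y i j \<omega>)))
            \<longlonglongrightarrow> (\<integral>\<omega>. maxterm d x (\<lambda>j\<in>{1..d}. X j \<omega>) \<partial>M)"
    proof (rule iid_from_Y[OF P Y_meas Y_indep Y_distr X_meas maxterm_meas])
      show "integrable M (\<lambda>\<omega>. maxterm d x (\<lambda>j\<in>{1..d}. X j \<omega>))" unfolding r by (rule mx_int)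
    qed (auto simp: maxterm_nn)
    then show ?thesis unfolding r emp_norm_def F_norm_def .
  qed
  have Flip: "\<bar>F_norm M X d x - F_norm M X d y\<bar> \<le> \<delta> * EL"
    if xy: "\<And>k. k \<le> d \<Longrightarrow> \<bar>x k - y k\<bar> \<le> \<delta>" for x y \<delta>
  proof -
    have "F_norm M X d x - F_norm M X d y = (\<integral>\<omega>. maxterm d x (\<lambda>j. X j \<omega>) - maxterm d y (\<lambda>j. X j \<omega>) \<partial>M)"
      unfolding F_norm_def by (rule Bochner_Integration.integral_diff[symmetric, OF mx_int mx_int])
    also have "\<bar>\<dots>\<bar> \<le> (\<integral>\<omega>. \<bar>maxterm d x (\<lambda>j. X j \<omega>) - maxterm d y (\<lambda>j. X j \<omega>)\<bar> \<partial>M)"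
      by (rule integral_abs_bound)
    also have "\<dots> \<le> (\<integral>\<omega>. \<delta> * (1 + (\<Sum>j\<in>{1..d}. \<bar>X j \<omega>\<bar>)) \<partial>M)"
    proof (rule Bochner_Integration.integral_mono)
      show "integrable M (\<lambda>\<omega>. \<bar>maxterm d x (\<lambda>j. X j \<omega>) - maxterm d y (\<lambda>j. X j \<omega>)\<bar>)"
        by (intro Bochner_Integration.integrable_abs Bochner_Integration.integrable_diff mx_int)
      show "integrable M (\<lambda>\<omega>. \<delta> * (1 + (\<Sum>j\<in>{1..d}. \<bar>X j \<omega>\<bar>)))"
        by (rule Bochner_Integration.integrable_mult_right[OF Lint])
      show "\<bar>maxterm d x (\<lambda>j. X j \<omega>) - maxterm d y (\<lambda>j. X j \<omega>)\<bar> \<le> \<delta> * (1 + (\<Sum>j\<in>{1..d}. \<bar>X j \<omega>\<bar>))" for \<omega>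
        by (rule maxterm_lip[OF xy])
    qed
    also have "\<dots> = \<delta> * EL" unfolding EL_def by simp
    finally show ?thesis .
  qed
  define B where "B = (\<Sum>k\<le>d. x0 k)"
  have x0B: "x0 k \<le> B" if "k \<le> d" for k
    unfolding B_def using that x0_nonneg by (intro member_le_sum) auto
  define K where "K N = nat \<lceil>B * real (Suc N)\<rceil>" for N
  define G where "G N = PiE {0..d} (\<lambda>_. {0..K N})" for N
  define gp where "gp N m = (\<lambda>k. if k \<le> d then real (m k) / real (Suc N) else 0)" for N m
  have finG: "finite (G N)" for N unfolding G_def by (simp add: finite_PiE)
  have convG: "AE \<omega> in M. \<forall>N. \<forall>m\<in>G N. (\<lambda>n. emp_norm Y d n (gp N m) \<omega>) \<longlonglongrightarrow> F_norm M X d (gp N m)"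
    unfolding AE_all_countable by (intro allI AE_finite_allI[OF finG] convx)
  have approx: "\<exists>m\<in>G N. \<forall>k\<le>d. \<bar>x k - gp N m k\<bar> \<le> 1 / real (Suc N)"
    if x: "\<forall>k\<in>{0..d}. 0 \<le> x k \<and> x k \<le> x0 k" for N x
  proof (intro bexI[of _ "restrict (\<lambda>k. nat \<lfloor>x k * real (Suc N)\<rfloor>) {0..d}"] allI impI)
    show "restrict (\<lambda>k. nat \<lfloor>x k * real (Suc N)\<rfloor>) {0..d} \<in> G N"
      unfolding G_def
    proof (rule PiE_I)
      fix k assume k: "k \<in> {0..d}"
      have "x k * real (Suc N) \<le> B * real (Suc N)"
      proof (rule mult_right_mono)
        have "x k \<le> x0 k" using x k by auto
        then show "x k \<le> B" using x0B[of k] k by simp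
      qed simp
      then have "nat \<lfloor>x k * real (Suc N)\<rfloor> \<le> K N" unfolding K_def by linarith
      then show "restrict (\<lambda>k. nat \<lfloor>x k * real (Suc N)\<rfloor>) {0..d} k \<in> {0..K N}" using k by simp
    qed auto
    fix k assume k: "k \<le> d"
    have xk: "0 \<le> x k" using x k by auto
    have "gp N (restrict (\<lambda>k. nat \<lfloor>x k * real (Suc N)\<rfloor>) {0..d}) k = real_of_int \<lfloor>x k * real (Suc N)\<rfloor> / real (Suc N)"
      unfolding gp_def using k xk by simp
    moreover have "\<bar>x k - real_of_int \<lfloor>x k * real (Suc N)\<rfloor> / real (Suc N)\<bar> \<le> 1 / real (Suc N)"
    proof -
      have "x k - real_of_int \<lfloor>x k * real (Suc N)\<rfloor> / real (Suc N)
          = (x k * real (Suc N) - real_of_int \<lfloor>x k * real (Suc N)\<rfloor>) / real (Suc N)"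
        by (simp add: field_simps)
      moreover have "0 \<le> x k * real (Suc N) - real_of_int \<lfloor>x k * real (Suc N)\<rfloor>"
        "x k * real (Suc N) - real_of_int \<lfloor>x k * real (Suc N)\<rfloor> \<le> 1" by linarith+
      ultimately show ?thesis by (simp add: divide_right_mono)
    qed
    ultimately show "\<bar>x k - gp N (restrict (\<lambda>k. nat \<lfloor>x k * real (Suc N)\<rfloor>) {0..d}) k\<bar> \<le> 1 / real (Suc N)"
      by simp
  qed
  show ?thesis using convG convL
  proof eventually_elim
    case (elim \<omega>)
    note cG = elim(1) and cL = elim(2)
    define box where "box = {x. \<forall>k\<in>{0..d}. 0 \<le> x k \<and> x k \<le> x0 k}"
    define D where "D n x = \<bar>emp_norm Y d n x \<omega> - F_norm M X d x\<bar>" for n x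
    define eL where "eL n = 1 / real n * (\<Sum>i<n. 1 + (\<Sum>j\<in>{1..d}. \<bar>Y i j \<omega>\<bar>))" for n
    have eL0: "eL n \<ge> 0" for n unfolding eL_def by (simp add: sum_nonneg add_nonneg_nonneg)
    have zbox: "(\<lambda>_. 0) \<in> box" unfolding box_def using x0_nonneg by auto
    show "(\<lambda>n. SUP x\<in>{x. \<forall>k\<in>{0..d}. 0 \<le> x k \<and> x k \<le> x0 k}. \<bar>emp_norm Y d n x \<omega> - F_norm M X d x\<bar>) \<longlonglongrightarrow> 0"
      unfolding box_def[symmetric] D_def[symmetric]
    proof (rule LIMSEQ_I)
      fix \<epsilon> :: real assume eps: "\<epsilon> > 0"
      obtain N :: nat where N: "(2 * EL + 1) / real (Suc N) < \<epsilon> / 2"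
      proof -
        obtain N :: nat where "2 * (2 * EL + 1) / \<epsilon> < real N" using reals_Archimedean2 by blast
        then have "2 * (2 * EL + 1) < \<epsilon> * real (Suc N)" using eps
          by (simp add: field_simps)
        then show ?thesis using that[of N] by (simp add: field_simps)
      qed
      define \<delta> where "\<delta> = 1 / real (Suc N)"
      have \<delta>0: "\<delta> > 0" unfolding \<delta>_def by simp
      have ev1: "eventually (\<lambda>n. eL n < EL + 1) sequentially"
        using order_tendstoD(2)[OF cL[folded eL_def], of "EL + 1"] by simp
      have ev2: "eventually (\<lambda>n. \<forall>m\<in>G N. D n (gp N m) < \<epsilon> / 2) sequentially"
      proof (rule eventually_ball_finite[OF finG], intro ballI)
        fix m assume "m \<in> G N"
        then have "(\<lambda>n. emp_norm Y d n (gp N m) \<omega>) \<longlonglongrightarrow> F_norm M X d (gp N m)" using cG by blast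
        from tendstoD[OF this, of "\<epsilon>/2"] eps
        show "eventually (\<lambda>n. D n (gp N m) < \<epsilon> / 2) sequentially"
          unfolding D_def dist_real_def by simp
      qed
      from eventually_conj[OF ev1 ev2] obtain n0 where n0:
        "\<And>n. n \<ge> n0 \<Longrightarrow> eL n < EL + 1 \<and> (\<forall>m\<in>G N. D n (gp N m) < \<epsilon> / 2)"
        unfolding eventually_sequentially by blast
      show "\<exists>no. \<forall>n\<ge>no. norm ((SUP x\<in>box. D n x) - 0) < \<epsilon>"
      proof (intro exI[of _ n0] allI impI)
        fix n assume n: "n \<ge> n0"
        define c where "c = \<epsilon> / 2 + \<delta> * (2 * EL + 1)"
        have c: "c < \<epsilon>" unfolding c_def \<delta>_def using N by (simp add: field_simps)
        have Dle: "D n x \<le> c" if xb: "x \<in> box" for x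
        proof -
          obtain m where m: "m \<in> G N" and mk: "\<And>k. k \<le> d \<Longrightarrow> \<bar>x k - gp N m k\<bar> \<le> \<delta>"
            using approx[of x N] xb unfolding box_def \<delta>_def by blast
          have a1: "\<bar>emp_norm Y d n x \<omega> - emp_norm Y d n (gp N m) \<omega>\<bar> \<le> \<delta> * eL n"
            unfolding eL_def by (rule emp_lip[OF mk])
          have a2: "\<bar>F_norm M X d x - F_norm M X d (gp N m)\<bar> \<le> \<delta> * EL"
            by (rule Flip[OF mk])
          have a3: "D n (gp N m) < \<epsilon> / 2" using n0[OF n] m by blast
          have a4: "\<delta> * eL n \<le> \<delta> * (EL + 1)" using n0[OF n] \<delta>0 by (intro mult_left_mono) auto
          have a5: "\<delta> * (2 * EL + 1) = \<delta> * (EL + 1) + \<delta> * EL" by (simp add: algebra_simps)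
          show ?thesis using a1 a2 a3 a4 a5 unfolding D_def c_def by linarith
        qed
        have bdd: "bdd_above (D n ` box)" using Dle by (intro bdd_aboveI) auto
        have s1: "(SUP x\<in>box. D n x) \<le> c" using zbox Dle by (intro cSUP_least) auto
        have "0 \<le> D n (\<lambda>_. 0)" unfolding D_def by simp
        also have "\<dots> \<le> (SUP x\<in>box. D n x)" by (rule cSUP_upper[OF zbox bdd])
        finally have s0: "0 \<le> (SUP x\<in>box. D n x)" .
        show "norm ((SUP x\<in>box. D n x) - 0) < \<epsilon>" using s0 s1 c by simp
      qed
    qed
  qed
qed


end
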